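(* Let $\Sigma$ be a $d\times d$ symmetric positive definite matrix, $\Omega=\Sigma^{-1}$, and consider the target $\mathcal{N}_d(0,\Sigma)$, whose log-density gradient at $x$ is $-\Omega x$. Let $X_t\ne Y_t$ be nonzero points, $n_x=-\Omega X_t/\lVert\Omega X_t\rVert$, $n_y=-\Omega Y_t/\lVert\Omega Y_t\rVert$, $e=(X_t-Y_t)/\lVert X_t-Y_t\rVert$, and let $Z_x,Z_y\sim\mathcal{N}_d(0,I_d)$ be coupled by CRN ($Z_y=Z_x$), reflection ($Z_y=Z_x-2(e^\top Z_x)e$) or GCRN ($Z_x=Z-(n_x^\top Z)n_x+Z_1n_x$, $Z_y=Z-(n_y^\top Z)n_y+Z_1n_y$ with $Z\sim\mathcal{N}_d(0,I_d)$, $Z_1\sim\mathcal{N}(0,1)$ independent). Then $\rho=\mathrm{Corr}(n_x^\top Z_x,n_y^\top Z_y)=\mathrm{Cov}(n_x^\top Z_x,n_y^\top Z_y)$ is $$\rho_{\mathrm{crn}}=\frac{v_1}{\sqrt{x_1y_1}},\quad \rho_{\mathrm{refl}}=\frac{v_1}{\sqrt{x_1y_1}}+\frac{1}{z_1^2z_{-1}^2}\frac{2(x_0-v_0)(y_0-v_0)}{\sqrt{x_1y_1}(x_{-1}+y_{-1}-2v_{-1})},\quad \rho_{\mathrm{gcrn}}=1.$$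
   Context: Notation: $\lVert x\rVert_A^2=x^\top Ax$, $\langle x,y\rangle_A=x^\top Ay$. The matrix $\Omega=\Omega_{(d)}$ is a member of a sequence satisfying: for $Z_{(d)}\sim\mathcal{N}_d(0,I_d)$ and each $k\in\mathbb{Z}$, $z_k^2=\lim_{d\to\infty}\lVert Z_{(d)}\rVert^2_{\Omega_{(d)}^k}/d$ exists in $L_2$ with $z_k\in(0,\infty)$ (so $z_0=1$). For $k\in\mathbb{Z}$, $(x_{k-1},y_{k-1},v_{k-1})=\frac{1}{z_{k-1}^2d}\big(\lVert X_t\rVert^2_{\Omega^k},\lVert Y_t\rVert^2_{\Omega^k},\langle X_t,Y_t\rangle_{\Omega^k}\big)$. *)

theory Defs
  imports "HOL-Probability.Probability"
begin

fun matpow :: "real^'n^'n \<Rightarrow> nat \<Rightarrow> real^'n^'n" where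
  "matpow A 0 = mat 1"
| "matpow A (Suc k) = A ** matpow A k"

definition qf :: "real^'n^'n \<Rightarrow> real^'n \<Rightarrow> real^'n \<Rightarrow> real" where
  "qf A x y = x \<bullet> (A *v y)"

text \<open>Paper's normalised quantities for index j = k - 1 (j \<ge> -1):
  x_j = |X|^2_{Omega^(j+1)} / (z_j^2 d), y_j likewise, v_j = <X,Y>_{Omega^(j+1)} / (z_j^2 d).\<close>
definition nq :: "real^'n^'n \<Rightarrow> (int \<Rightarrow> real) \<Rightarrow> real^'n \<Rightarrow> real^'n \<Rightarrow> int \<Rightarrow> real" where
  "nq Om z X Y j = qf (matpow Om (nat (j + 1))) X Y / ((z j)\<^sup>2 * real CARD('n))"

definition covar :: "'a measure \<Rightarrow> ('a \<Rightarrow> real) \<Rightarrow> ('a \<Rightarrow> real) \<Rightarrow> real" where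
  "covar M U V = (LINT \<omega>|M. (U \<omega> - (LINT \<omega>|M. U \<omega>)) * (V \<omega> - (LINT \<omega>|M. V \<omega>)))"

definition correl :: "'a measure \<Rightarrow> ('a \<Rightarrow> real) \<Rightarrow> ('a \<Rightarrow> real) \<Rightarrow> real" where
  "correl M U V = covar M U V / sqrt (covar M U U * covar M V V)"

end

theory Submission
  imports Defs
begin

lemma std_moments:
  assumes P: "prob_space M" and D: "distributed M lborel W std_normal_density"
  shows "integrable M W" "integrable M (\<lambda>\<omega>. W \<omega> * W \<omega>)"
    "integral\<^sup>L M W = 0" "integral\<^sup>L M (\<lambda>\<omega>. W \<omega> * W \<omega>) = 1"
proof -
  have i1: "integrable M (\<lambda>\<omega>. (W \<omega>)^1)"
    using distributed_integrable[OF D, of "\<lambda>x. x^1"] integrable_std_normal_moment[of 1] by simp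
  then show "integrable M W" by simp
  have i2: "integrable M (\<lambda>\<omega>. (W \<omega>)^2)"
    using distributed_integrable[OF D, of "\<lambda>x. x^2"] integrable_std_normal_moment[of 2] by simp
  then show "integrable M (\<lambda>\<omega>. W \<omega> * W \<omega>)" by (simp add: power2_eq_square)
  have "integral\<^sup>L M (\<lambda>\<omega>. (W \<omega>)^(2*0+1)) = 0"
    using distributed_integral[OF D, of "\<lambda>x. x^(2*0+1)"] integral_std_normal_moment_odd[of 0] by simp
  then show "integral\<^sup>L M W = 0" by simp
  have "integral\<^sup>L M (\<lambda>\<omega>. (W \<omega>)^(2*1)) = 1"
    using distributed_integral[OF D, of "\<lambda>x. x^(2*1)"] integral_std_normal_moment_even[of 1] by simp
  then show "integral\<^sup>L M (\<lambda>\<omega>. W \<omega> * W \<omega>) = 1" by (simp add: power2_eq_square)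
qed

lemma lin_cov:
  fixes W :: "'i::finite \<Rightarrow> 'a \<Rightarrow> real"
  assumes P: "prob_space M"
    and ind: "prob_space.indep_vars M (\<lambda>_. borel) W UNIV"
    and D: "\<And>i. distributed M lborel (W i) std_normal_density"
  shows "covar M (\<lambda>\<omega>. \<Sum>i\<in>UNIV. c i * W i \<omega>) (\<lambda>\<omega>. \<Sum>i\<in>UNIV. d i * W i \<omega>)
         = (\<Sum>i\<in>UNIV. c i * d i)"
proof -
  note m = std_moments[OF P D]
  have pair: "integrable M (\<lambda>\<omega>. W i \<omega> * W k \<omega>) \<and>
      integral\<^sup>L M (\<lambda>\<omega>. W i \<omega> * W k \<omega>) = (if i = k then 1 else 0)" for i k
  proof (cases "i = k")
    case True then show ?thesis using m by simp
  next
    case False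
    have ik: "prob_space.indep_vars M (\<lambda>_. borel) W {i, k}"
      using prob_space.indep_vars_subset[OF P ind] by auto
    have "integrable M (\<lambda>\<omega>. \<Prod>j\<in>{i,k}. W j \<omega>)"
      using prob_space.indep_vars_integrable[OF P _ ik] m by auto
    moreover have "integral\<^sup>L M (\<lambda>\<omega>. \<Prod>j\<in>{i,k}. W j \<omega>) = (\<Prod>j\<in>{i,k}. integral\<^sup>L M (W j))"
      using prob_space.indep_vars_lebesgue_integral[OF P _ ik] m by auto
    ultimately show ?thesis using False m by simp
  qed
  have int0: "integral\<^sup>L M (\<lambda>\<omega>. \<Sum>i\<in>UNIV. c i * W i \<omega>) = 0" for c
    using m by (simp add: integral_sum)
  have "(\<lambda>\<omega>. (\<Sum>i\<in>UNIV. c i * W i \<omega>) * (\<Sum>k\<in>UNIV. d k * W k \<omega>))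
      = (\<lambda>\<omega>. \<Sum>i\<in>UNIV. \<Sum>k\<in>UNIV. (c i * d k) * (W i \<omega> * W k \<omega>))"
    by (simp add: sum_product algebra_simps)
  moreover have "integral\<^sup>L M (\<lambda>\<omega>. \<Sum>i\<in>UNIV. \<Sum>k\<in>UNIV. (c i * d k) * (W i \<omega> * W k \<omega>))
      = (\<Sum>i\<in>UNIV. \<Sum>k\<in>UNIV. (c i * d k) * (if i = k then 1 else 0))"
    using pair by (simp add: integral_sum)
  ultimately show ?thesis
    unfolding covar_def int0 by (simp add: if_distrib cong: if_cong)
qed

lemma sum_option_univ:
  fixes f :: "'n::finite option \<Rightarrow> real"
  shows "(\<Sum>i\<in>UNIV. f i) = f None + (\<Sum>j\<in>UNIV. f (Some j))"
proof -
  have "(UNIV :: 'n option set) = insert None (Some ` UNIV)" by (rule UNIV_option_conv)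
  then have "(\<Sum>i\<in>UNIV. f i) = (\<Sum>i\<in>insert None (Some ` UNIV). f i)" by simp
  also have "\<dots> = f None + (\<Sum>j\<in>UNIV. f (Some j))"
    by (subst sum.insert) (auto simp: sum.reindex)
  finally show ?thesis .
qed

lemma aff_cov:
  fixes Z :: "'a \<Rightarrow> real^'n" and Z1 :: "'a \<Rightarrow> real"
  assumes P: "prob_space M"
    and indep: "prob_space.indep_vars M (\<lambda>_. borel)
                  (\<lambda>i \<omega>. case i of Some j \<Rightarrow> Z \<omega> $ j | None \<Rightarrow> Z1 \<omega>) (UNIV :: 'n option set)"
    and distZ: "\<forall>j. distributed M lborel (\<lambda>\<omega>. Z \<omega> $ j) std_normal_density"
    and distZ1: "distributed M lborel Z1 std_normal_density"
  shows "covar M (\<lambda>\<omega>. a \<bullet> Z \<omega> + \<alpha> * Z1 \<omega>) (\<lambda>\<omega>. b \<bullet> Z \<omega> + \<beta> * Z1 \<omega>) = a \<bullet> b + \<alpha> * \<beta>"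
proof -
  define W where "W = (\<lambda>i \<omega>. case i of Some j \<Rightarrow> Z \<omega> $ j | None \<Rightarrow> Z1 \<omega>)"
  have D: "distributed M lborel (W i) std_normal_density" for i
    using distZ distZ1 by (cases i) (auto simp: W_def)
  have rw: "(\<lambda>\<omega>. a \<bullet> Z \<omega> + \<alpha> * Z1 \<omega>) =
     (\<lambda>\<omega>. \<Sum>i\<in>UNIV. (case i of Some j \<Rightarrow> a $ j | None \<Rightarrow> \<alpha>) * W i \<omega>)" for a \<alpha>
    by (rule ext, subst sum_option_univ) (simp add: W_def inner_vec_def)
  show ?thesis
    unfolding rw
    apply (subst lin_cov[OF P])
    using indep D apply (simp_all add: W_def)
    apply (subst sum_option_univ)
    apply (simp add: inner_vec_def)
    done
qed

theorem lemma3: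
  fixes M :: "'a measure"
    and Sigma Om :: "real^'n^'n"
    and X Y :: "real^'n"
    and z :: "int \<Rightarrow> real"
    and Z :: "'a \<Rightarrow> real^'n"
    and Z1 :: "'a \<Rightarrow> real"
  assumes "prob_space M"
    and sym: "transpose Sigma = Sigma"
    and pd: "\<forall>u. u \<noteq> 0 \<longrightarrow> u \<bullet> (Sigma *v u) > 0"
    and Om: "Om = matrix_inv Sigma"
    and "X \<noteq> 0" and "Y \<noteq> 0" and "X \<noteq> Y"
    and z0: "z 0 = 1" and zpos: "\<forall>k. z k > 0"
    and indep: "prob_space.indep_vars M (\<lambda>_. borel)
                  (\<lambda>i \<omega>. case i of Some j \<Rightarrow> Z \<omega> $ j | None \<Rightarrow> Z1 \<omega>) (UNIV :: 'n option set)"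
    and distZ: "\<forall>j. distributed M lborel (\<lambda>\<omega>. Z \<omega> $ j) std_normal_density"
    and distZ1: "distributed M lborel Z1 std_normal_density"
  shows
   "let nx = - (1 / norm (Om *v X)) *\<^sub>R (Om *v X);
        ny = - (1 / norm (Om *v Y)) *\<^sub>R (Om *v Y);
        e  = (1 / norm (X - Y)) *\<^sub>R (X - Y);
        x = nq Om z X X; y = nq Om z Y Y; v = nq Om z X Y;
        \<comment> \<open>CRN coupling: Z_x = Z_y = Z\<close>
        Ux_crn = (\<lambda>\<omega>. nx \<bullet> Z \<omega>);
        Uy_crn = (\<lambda>\<omega>. ny \<bullet> Z \<omega>);
        \<comment> \<open>reflection coupling: Z_x = Z, Z_y = Z - 2 (e^T Z) e\<close>
        Ux_refl = (\<lambda>\<omega>. nx \<bullet> Z \<omega>);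
        Uy_refl = (\<lambda>\<omega>. ny \<bullet> (Z \<omega> - (2 * (e \<bullet> Z \<omega>)) *\<^sub>R e));
        \<comment> \<open>GCRN coupling\<close>
        Ux_gcrn = (\<lambda>\<omega>. nx \<bullet> (Z \<omega> - (nx \<bullet> Z \<omega>) *\<^sub>R nx + Z1 \<omega> *\<^sub>R nx));
        Uy_gcrn = (\<lambda>\<omega>. ny \<bullet> (Z \<omega> - (ny \<bullet> Z \<omega>) *\<^sub>R ny + Z1 \<omega> *\<^sub>R ny));
        rho_crn = v 1 / sqrt (x 1 * y 1);
        rho_refl = v 1 / sqrt (x 1 * y 1)
                   + (1 / ((z 1)\<^sup>2 * (z (-1))\<^sup>2)) *
                     (2 * (x 0 - v 0) * (y 0 - v 0) /
                      (sqrt (x 1 * y 1) * (x (-1) + y (-1) - 2 * v (-1))))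
    in correl M Ux_crn Uy_crn = rho_crn \<and> covar M Ux_crn Uy_crn = rho_crn
     \<and> correl M Ux_refl Uy_refl = rho_refl \<and> covar M Ux_refl Uy_refl = rho_refl
     \<and> correl M Ux_gcrn Uy_gcrn = 1 \<and> covar M Ux_gcrn Uy_gcrn = 1"
proof -
  note AC = aff_cov[OF assms(1) indep distZ distZ1]
  have cov: "covar M (\<lambda>\<omega>. a \<bullet> Z \<omega>) (\<lambda>\<omega>. b \<bullet> Z \<omega>) = a \<bullet> b" for a b
    using AC[of a 0 b 0] by simp
  have inj: "inj ((*v) Sigma)"
  proof (rule injI)
    fix u w assume "Sigma *v u = Sigma *v w"
    then have "Sigma *v (u - w) = 0" by (simp add: matrix_vector_mult_diff_distrib)
    then show "u = w" using pd by (metis inner_zero_right less_irrefl eq_iff_diff_eq_0)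
  qed
  then obtain B where "B ** Sigma = mat 1" using matrix_left_invertible_injective by blast
  then have "Sigma ** B = mat 1 \<and> B ** Sigma = mat 1" using matrix_left_right_inverse by blast
  then have inv: "Sigma ** Om = mat 1 \<and> Om ** Sigma = mat 1"
    unfolding Om matrix_inv_def by (rule someI)
  have symO: "transpose Om = Om"
  proof -
    have "transpose Om ** Sigma = mat 1"
      using inv by (metis matrix_transpose_mul sym transpose_mat)
    then have "transpose Om = transpose Om ** (Sigma ** Om)" using inv by (simp add: matrix_mul_assoc)
    also have "\<dots> = Om" using \<open>transpose Om ** Sigma = mat 1\<close> by (metis matrix_mul_assoc matrix_mul_lid)
    finally show ?thesis .
  qed
  have symv: "u \<bullet> (Om *v w) = w \<bullet> (Om *v u)" for u w
    by (metis dot_lmul_matrix inner_commute symO transpose_matrix_vector)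
  have nz: "Om *v u \<noteq> 0" if "u \<noteq> 0" for u
  proof
    assume "Om *v u = 0"
    then have "Sigma *v (Om *v u) = 0" by simp
    then show False using inv that by (simp add: matrix_vector_mul_assoc)
  qed
  define p where "p = Om *v X"
  define q where "q = Om *v Y"
  define D where "D = real CARD('n)"
  have Dpos: "D > 0" unfolding D_def by simp
  have np: "norm p > 0" "norm q > 0" "norm (X - Y) > 0"
    using nz \<open>X \<noteq> 0\<close> \<open>Y \<noteq> 0\<close> \<open>X \<noteq> Y\<close> by (auto simp: p_def q_def)
  have mp2: "matpow Om (nat (1 + 1)) = Om ** Om"
    by (simp add: numeral_2_eq_2)
  have qf2: "qf (matpow Om (nat (1 + 1))) U V = (Om *v U) \<bullet> (Om *v V)" for U V
    unfolding mp2 qf_def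
    by (metis matrix_vector_mul_assoc symv inner_commute)
  have qf1: "qf (matpow Om (nat (0 + 1))) U V = U \<bullet> (Om *v V)" for U V
    by (simp add: qf_def)
  have qf0: "qf (matpow Om (nat (-1 + 1))) U V = U \<bullet> V" for U V
    by (simp add: qf_def)
  have qf2': "qf (matpow Om 2) U V = (Om *v U) \<bullet> (Om *v V)" for U V
    using qf2 by simp
  have nq1: "nq Om z U V 1 = (Om *v U) \<bullet> (Om *v V) / ((z 1)\<^sup>2 * D)" for U V
    unfolding nq_def D_def by (simp add: qf2')
  have nq0: "nq Om z U V 0 = U \<bullet> (Om *v V) / D" for U V
    unfolding nq_def D_def by (simp add: qf_def z0)
  have nqm: "nq Om z U V (-1) = U \<bullet> V / ((z (-1))\<^sup>2 * D)" for U V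
    unfolding nq_def D_def by (simp add: qf_def)
  define nx where "nx = - (1 / norm p) *\<^sub>R p"
  define ny where "ny = - (1 / norm q) *\<^sub>R q"
  define e where "e = (1 / norm (X - Y)) *\<^sub>R (X - Y)"
  have "norm nx = 1" "norm ny = 1" "norm e = 1"
    using np by (simp_all add: nx_def ny_def e_def del: scaleR_minus_left)
  then have nn: "nx \<bullet> nx = 1" "ny \<bullet> ny = 1" "e \<bullet> e = 1"
    by (simp_all add: power2_norm_eq_inner[symmetric])
  have nxny: "nx \<bullet> ny = p \<bullet> q / (norm p * norm q)"
    by (simp add: nx_def ny_def)
  have nxe: "nx \<bullet> e = - (p \<bullet> (X - Y)) / (norm p * norm (X - Y))"
    by (simp add: nx_def e_def)
  have nye: "ny \<bullet> e = - (q \<bullet> (X - Y)) / (norm q * norm (X - Y))"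
    by (simp add: ny_def e_def)
  define b where "b = ny - (2 * (ny \<bullet> e)) *\<^sub>R e"
  have bb: "b \<bullet> b = 1"
    using nn by (simp add: b_def inner_diff_left inner_diff_right algebra_simps inner_commute power2_eq_square)
  have nxb: "nx \<bullet> b = nx \<bullet> ny - 2 * (ny \<bullet> e) * (nx \<bullet> e)"
    by (simp add: b_def inner_diff_right)
  have Uyr: "(\<lambda>\<omega>. ny \<bullet> (Z \<omega> - (2 * (e \<bullet> Z \<omega>)) *\<^sub>R e)) = (\<lambda>\<omega>. b \<bullet> Z \<omega>)"
    by (rule ext) (simp add: b_def inner_diff_right inner_diff_left inner_commute)
  have Ug: "(\<lambda>\<omega>. w \<bullet> (Z \<omega> - (w \<bullet> Z \<omega>) *\<^sub>R w + Z1 \<omega> *\<^sub>R w)) = Z1" if "w \<bullet> w = 1" for w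
    by (rule ext) (simp add: inner_diff_right inner_add_right that)
  have c11: "covar M Z1 Z1 = 1"
    using AC[of 0 1 0 1] by simp
  have sq: "sqrt (nq Om z X X 1 * nq Om z Y Y 1) = norm p * norm q / ((z 1)\<^sup>2 * D)"
  proof -
    have "nq Om z X X 1 * nq Om z Y Y 1 = (norm p * norm q / ((z 1)\<^sup>2 * D))\<^sup>2"
      unfolding nq1 p_def[symmetric] q_def[symmetric]
      by (simp add: power2_norm_eq_inner[symmetric] power_mult_distrib power_divide power2_eq_square)
    moreover have "norm p * norm q / ((z 1)\<^sup>2 * D) \<ge> 0" using Dpos by simp
    ultimately show ?thesis by (metis real_sqrt_abs abs_of_nonneg)
  qed
  have E1: "nx \<bullet> ny = nq Om z X Y 1 / sqrt (nq Om z X X 1 * nq Om z Y Y 1)"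
    unfolding sq nxny
    unfolding nq1 p_def[symmetric] q_def[symmetric]
    using Dpos zpos[rule_format, of 1] np by (simp add: field_simps)
  have Yp: "Y \<bullet> p = X \<bullet> q" unfolding p_def q_def by (rule symv)
  have nXY: "(norm (X - Y))\<^sup>2 = X \<bullet> X + Y \<bullet> Y - 2 * (X \<bullet> Y)"
    by (simp add: power2_norm_eq_inner inner_diff_left inner_diff_right inner_commute)
  have E2: "- 2 * (ny \<bullet> e) * (nx \<bullet> e) = (1 / ((z 1)\<^sup>2 * (z (-1))\<^sup>2)) *
                     (2 * (nq Om z X X 0 - nq Om z X Y 0) * (nq Om z Y Y 0 - nq Om z X Y 0) /
                      (sqrt (nq Om z X X 1 * nq Om z Y Y 1) *
                        (nq Om z X X (-1) + nq Om z Y Y (-1) - 2 * nq Om z X Y (-1))))"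
  proof -
    have m: "nq Om z X X (-1) + nq Om z Y Y (-1) - 2 * nq Om z X Y (-1)
        = (norm (X - Y))\<^sup>2 / ((z (-1))\<^sup>2 * D)"
      unfolding nqm nXY using Dpos zpos[rule_format, of "-1"] by (simp add: field_simps)
    have a1: "p \<bullet> (X - Y) = X \<bullet> p - X \<bullet> q" using Yp by (simp add: inner_diff_right inner_commute)
    have a2: "q \<bullet> (X - Y) = X \<bullet> q - Y \<bullet> q" by (simp add: inner_diff_right inner_commute)
    have z1: "z 1 > 0" and zm: "z (-1) > 0" using zpos by auto
    show ?thesis
      unfolding m sq
      unfolding nq0 nye nxe a1 a2 p_def[symmetric] q_def[symmetric]
      using Dpos z1 zm np by (simp add: field_simps power2_eq_square)
  qed
  show ?thesis
    unfolding Let_def p_def[symmetric] q_def[symmetric] nx_def[symmetric] ny_def[symmetric]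
      e_def[symmetric] Uyr Ug[OF nn(1)] Ug[OF nn(2)]
    using cov[of nx ny] cov[of nx nx] cov[of ny ny] cov[of nx b] cov[of b b] nn bb c11 E1 E2 nxb
    by (simp add: correl_def)
qed
end
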